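(* Let $X$ be a paracompact $\sigma$-space and let $(\lambda_i)_{i\ge1}$ be a sequence of open locally finite covers of $X$ with $\lambda_{i+1}\succ\lambda_i$ for all $i$. Then there exist a sequence $(\omega_i^\circ)_{i\ge1}$ of open locally finite covers of $X$ with $\omega_i^\circ\succ\lambda_i$ and $\omega^\circ_{i+1}\succ\omega^\circ_i$ for all $i$, a metric space $Z$, and a continuous bijection $\psi\colon X\to Z$ such that $\psi(\omega_i^\circ)=\{\psi(G):G\in\omega_i^\circ\}$ is an open locally finite cover of $Z$ for every $i$.
   Context: A $\sigma$-space is a regular $T_1$ space with a $\sigma$-discrete network (a network being a family $\mu$ such that for every $x$ and neighborhood $Ox$ there is $F\in\mu$ with $x\in F\subseteq Ox$). For covers $\omega,\lambda$, $\omega\succ\lambda$ means $\omega$ refines $\lambda$. *)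

theory Defs
  imports "HOL-Analysis.Analysis"
begin

definition open_cover_of :: "'a topology \<Rightarrow> 'a set set \<Rightarrow> bool" where
  "open_cover_of X \<U> \<longleftrightarrow> (\<forall>U\<in>\<U>. openin X U) \<and> \<Union>\<U> = topspace X"

definition refines :: "'a set set \<Rightarrow> 'a set set \<Rightarrow> bool" where
  "refines \<omega> L \<longleftrightarrow> (\<forall>A\<in>\<omega>. \<exists>B\<in>L. A \<subseteq> B)"

definition paracompact_space :: "'a topology \<Rightarrow> bool" where
  "paracompact_space X \<longleftrightarrow> Hausdorff_space X \<and>
     (\<forall>\<U>. open_cover_of X \<U> \<longrightarrow>
        (\<exists>\<V>. open_cover_of X \<V> \<and> locally_finite_in X \<V> \<and> refines \<V> \<U>))"

definition discrete_family_in :: "'a topology \<Rightarrow> 'a set set \<Rightarrow> bool" where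
  "discrete_family_in X \<A> \<longleftrightarrow>
     (\<forall>x\<in>topspace X. \<exists>V. openin X V \<and> x \<in> V \<and>
        (\<forall>A\<in>\<A>. \<forall>B\<in>\<A>. A \<inter> V \<noteq> {} \<and> B \<inter> V \<noteq> {} \<longrightarrow> A = B))"

definition sigma_discrete_in :: "'a topology \<Rightarrow> 'a set set \<Rightarrow> bool" where
  "sigma_discrete_in X \<mu> \<longleftrightarrow>
     (\<exists>f :: nat \<Rightarrow> 'a set set. (\<forall>n. discrete_family_in X (f n)) \<and> \<mu> = (\<Union>n. f n))"

definition network_of :: "'a topology \<Rightarrow> 'a set set \<Rightarrow> bool" where
  "network_of X \<mu> \<longleftrightarrow>
     (\<forall>x W. openin X W \<and> x \<in> W \<longrightarrow> (\<exists>F\<in>\<mu>. x \<in> F \<and> F \<subseteq> W))"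

definition sigma_space :: "'a topology \<Rightarrow> bool" where
  "sigma_space X \<longleftrightarrow> regular_space X \<and> t1_space X \<and>
     (\<exists>\<mu>. network_of X \<mu> \<and> sigma_discrete_in X \<mu>)"

end

theory Submission
  imports Defs
begin


definition pm :: "'a topology \<Rightarrow> ('a \<Rightarrow> 'a \<Rightarrow> real) \<Rightarrow> bool" where
  "pm X \<rho> \<longleftrightarrow> (\<forall>x y. 0 \<le> \<rho> x y \<and> \<rho> x y \<le> 1 \<and> \<rho> x y = \<rho> y x) \<and> (\<forall>x. \<rho> x x = 0)
     \<and> (\<forall>x y z. \<rho> x z \<le> \<rho> x y + \<rho> y z)
     \<and> (\<forall>x\<in>topspace X. \<forall>e>0. \<exists>N. openin X N \<and> x \<in> N \<and> (\<forall>z\<in>N. \<rho> x z < e))"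

lemma sup_ub:
  fixes f :: "'i \<Rightarrow> real"
  assumes "\<And>i. i \<in> I \<Longrightarrow> f i \<le> B" "i \<in> I"
  shows "f i \<le> Sup (insert 0 (f ` I))"
proof -
  have "bdd_above (insert 0 (f ` I))"
    using assms(1) by (intro bdd_aboveI[of _ "max 0 B"]) (auto simp: le_max_iff_disj)
  then show ?thesis using assms(2) by (intro cSup_upper) auto
qed

lemma sup_ge0:
  fixes f :: "'i \<Rightarrow> real"
  assumes "\<And>i. i \<in> I \<Longrightarrow> f i \<le> B"
  shows "0 \<le> Sup (insert 0 (f ` I))"
proof -
  have "bdd_above (insert 0 (f ` I))"
    using assms(1) by (intro bdd_aboveI[of _ "max 0 B"]) (auto simp: le_max_iff_disj)
  then show ?thesis by (intro cSup_upper) auto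
qed

lemma sup_le:
  fixes f :: "'i \<Rightarrow> real"
  assumes "\<And>i. i \<in> I \<Longrightarrow> f i \<le> c" "0 \<le> c"
  shows "Sup (insert 0 (f ` I)) \<le> c"
  using assms by (intro cSup_least) auto

lemma finite_nbhd:
  assumes "finite S" "x \<in> topspace X"
    "\<forall>V\<in>S. \<exists>N. openin X N \<and> x \<in> N \<and> (\<forall>z\<in>N. Q V z)"
  shows "\<exists>N. openin X N \<and> x \<in> N \<and> (\<forall>V\<in>S. \<forall>z\<in>N. Q V z)"
  using assms
proof (induction S rule: finite_induct)
  case empty
  then show ?case by (intro exI[of _ "topspace X"]) auto
next
  case (insert a F)
  then obtain N1 where "openin X N1" "x \<in> N1" "\<forall>V\<in>F. \<forall>z\<in>N1. Q V z" by auto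
  moreover obtain N2 where "openin X N2" "x \<in> N2" "\<forall>z\<in>N2. Q a z" using insert by auto
  ultimately show ?case by (intro exI[of _ "N1 \<inter> N2"]) auto
qed

lemma cont_nbhd:
  assumes "continuous_map X euclideanreal f" "x \<in> topspace X" "e > 0"
  shows "\<exists>N. openin X N \<and> x \<in> N \<and> (\<forall>z\<in>N. \<bar>f z - f x\<bar> < e)"
proof -
  have "\<forall>U. open U \<longrightarrow> openin X {x \<in> topspace X. f x \<in> U}"
    using assms(1) by (simp add: continuous_map_def)
  then have "openin X {z \<in> topspace X. f z \<in> ball (f x) e}"
    using open_ball by blast
  then show ?thesis using assms
    by (intro exI[of _ "{z \<in> topspace X. f z \<in> ball (f x) e}"]) (auto simp: dist_real_def)
qed

lemma reg_nbhd:
  assumes "regular_space X" "openin X W" "x \<in> W"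
  obtains U where "openin X U" "x \<in> U" "X closure_of U \<subseteq> W"
proof -
  have "closedin X (topspace X - W)" "x \<in> topspace X - (topspace X - W)"
    using assms openin_subset by fastforce+
  then obtain U where "openin X U" "x \<in> U" "disjnt (topspace X - W) (X closure_of U)"
    using assms(1) unfolding regular_space by blast
  moreover have "X closure_of U \<subseteq> topspace X" by (rule closure_of_subset_topspace)
  ultimately have "X closure_of U \<subseteq> W" "openin X U" "x \<in> U" by (auto simp: disjnt_def)
  then show ?thesis using that by blast
qed

lemma refines_trans: "refines A B \<Longrightarrow> refines B C \<Longrightarrow> refines A C"
  unfolding refines_def by (meson order_trans)

lemma lf_point_finite:
  assumes "locally_finite_in X \<A>" "x \<in> topspace X"
  shows "finite {V\<in>\<A>. x \<in> V}"
proof -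
  obtain N where "openin X N" "x \<in> N" "finite {U \<in> \<A>. U \<inter> N \<noteq> {}}"
    using assms unfolding locally_finite_in_def by blast
  then show ?thesis by (rule_tac finite_subset[of _ "{U \<in> \<A>. U \<inter> N \<noteq> {}}"]) auto
qed

lemma para_normal:
  assumes par: "paracompact_space X" and reg: "regular_space X"
  shows "normal_space X"
  unfolding normal_space_def
proof clarify
  fix S T assume S: "closedin X S" and T: "closedin X T" and ST: "disjnt S T"
  define \<U> where "\<U> = insert (topspace X - S) {Q. openin X Q \<and> disjnt T (X closure_of Q)}"
  have "open_cover_of X \<U>"
    unfolding open_cover_of_def
  proof
    show "\<forall>U\<in>\<U>. openin X U" using S by (auto simp: \<U>_def)
    show "\<Union>\<U> = topspace X"
    proof
      show "\<Union>\<U> \<subseteq> topspace X" by (auto simp: \<U>_def dest: openin_subset)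
      show "topspace X \<subseteq> \<Union>\<U>"
      proof
        fix x assume x: "x \<in> topspace X"
        show "x \<in> \<Union>\<U>"
        proof (cases "x \<in> S")
          case False then show ?thesis using x by (auto simp: \<U>_def)
        next
          case True
          then have "x \<in> topspace X - T" using x ST by (auto simp: disjnt_def)
          moreover have "openin X (topspace X - T)" using T by auto
          ultimately obtain Q where "openin X Q" "x \<in> Q" "X closure_of Q \<subseteq> topspace X - T"
            using reg_nbhd[OF reg] by metis
          then have "Q \<in> \<U>" by (auto simp: \<U>_def disjnt_def)
          then show ?thesis using \<open>x \<in> Q\<close> by blast
        qed
      qed
    qed
  qed
  then obtain \<V> where V: "open_cover_of X \<V>" "locally_finite_in X \<V>" "refines \<V> \<U>"
    using par unfolding paracompact_space_def by blast
  define \<V>S where "\<V>S = {V\<in>\<V>. V \<inter> S \<noteq> {}}"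
  define U where "U = \<Union>\<V>S"
  define C where "C = \<Union>((\<lambda>V. X closure_of V) ` \<V>S)"
  have oU: "openin X U" using V(1) by (auto simp: U_def \<V>S_def open_cover_of_def)
  have SU: "S \<subseteq> U"
  proof
    fix x assume "x \<in> S"
    then have "x \<in> topspace X" using S closedin_subset by blast
    then obtain V where "V \<in> \<V>" "x \<in> V" using V(1) by (auto simp: open_cover_of_def)
    then show "x \<in> U" using \<open>x \<in> S\<close> by (auto simp: U_def \<V>S_def)
  qed
  have cC: "closedin X C"
    unfolding C_def by (rule closedin_Union_locally_finite_closure,
        rule locally_finite_in_subset[OF V(2)]) (auto simp: \<V>S_def)
  have "V \<subseteq> X closure_of V" if "V \<in> \<V>S" for V
    using V(1) that by (intro closure_of_subset) (auto simp: \<V>S_def open_cover_of_def)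
  then have UC: "U \<subseteq> C" unfolding U_def C_def by blast
  have CT: "C \<inter> T = {}"
  proof -
    { fix V assume "V \<in> \<V>S"
      then obtain B where "B \<in> \<U>" "V \<subseteq> B" "V \<inter> S \<noteq> {}"
        using V(3) by (auto simp: refines_def \<V>S_def)
      then have "B \<noteq> topspace X - S" by blast
      then have "disjnt T (X closure_of B)" using \<open>B \<in> \<U>\<close> by (auto simp: \<U>_def)
      moreover have "X closure_of V \<subseteq> X closure_of B" using \<open>V \<subseteq> B\<close> by (rule closure_of_mono)
      ultimately have "X closure_of V \<inter> T = {}" by (auto simp: disjnt_def)
    }
    then show ?thesis by (auto simp: C_def)
  qed
  show "\<exists>U V. openin X U \<and> openin X V \<and> S \<subseteq> U \<and> T \<subseteq> V \<and> disjnt U V"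
    apply (rule exI[of _ U], rule exI[of _ "topspace X - C"])
    using oU SU cC UC CT closedin_subset[OF T] by (auto simp: disjnt_def)
qed



definition good :: "'a topology \<Rightarrow> 'a set set \<Rightarrow> 'a set set \<Rightarrow> ('a \<Rightarrow> 'a \<Rightarrow> real) \<Rightarrow> bool" where
  "good X \<U> \<W> \<rho> \<longleftrightarrow> open_cover_of X \<W> \<and> locally_finite_in X \<W> \<and> refines \<W> \<U> \<and> pm X \<rho>
     \<and> (\<forall>W\<in>\<W>. \<forall>x\<in>W. \<exists>r>0. \<forall>y\<in>topspace X. \<rho> x y < r \<longrightarrow> y \<in> W)
     \<and> (\<forall>x\<in>topspace X. \<exists>r>0. finite {W\<in>\<W>. \<exists>y\<in>topspace X. \<rho> x y < r \<and> y \<in> W})"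

lemma clamp_lip: "\<bar>max 0 (min 1 (a::real)) - max 0 (min 1 b)\<bar> \<le> \<bar>a - b\<bar>"
  by (auto simp: max_def min_def abs_if)

lemma keyB:
  assumes par: "paracompact_space X" and reg: "regular_space X" and U: "open_cover_of X \<U>"
  shows "\<exists>\<W> \<rho>. good X \<U> \<W> \<rho>"
proof -
  obtain \<V> where V: "open_cover_of X \<V>" "locally_finite_in X \<V>" "refines \<V> \<U>"
    using par U unfolding paracompact_space_def by blast
  define \<R> where "\<R> = {Q. openin X Q \<and> (\<exists>V\<in>\<V>. X closure_of Q \<subseteq> V)}"
  have "open_cover_of X \<R>"
    unfolding open_cover_of_def
  proof
    show "\<forall>U\<in>\<R>. openin X U" by (auto simp: \<R>_def)
    show "\<Union>\<R> = topspace X"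
    proof
      show "\<Union>\<R> \<subseteq> topspace X" by (auto simp: \<R>_def dest: openin_subset)
      show "topspace X \<subseteq> \<Union>\<R>"
      proof
        fix x assume "x \<in> topspace X"
        then obtain V where "V \<in> \<V>" "x \<in> V" using V(1) by (auto simp: open_cover_of_def)
        moreover then have "openin X V" using V(1) by (auto simp: open_cover_of_def)
        ultimately obtain Q where "openin X Q" "x \<in> Q" "X closure_of Q \<subseteq> V"
          using reg_nbhd[OF reg] by metis
        then show "x \<in> \<Union>\<R>" using \<open>V \<in> \<V>\<close> by (auto simp: \<R>_def)
      qed
    qed
  qed
  then obtain \<V>' where V': "open_cover_of X \<V>'" "locally_finite_in X \<V>'" "refines \<V>' \<R>"
    using par unfolding paracompact_space_def by blast
  define F where "F V = \<Union>((\<lambda>S. X closure_of S) ` {Q\<in>\<V>'. X closure_of Q \<subseteq> V})" for V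
  have Fc: "closedin X (F V)" for V
    unfolding F_def by (rule closedin_Union_locally_finite_closure,
        rule locally_finite_in_subset[OF V'(2)]) auto
  have FV: "F V \<subseteq> V" for V by (auto simp: F_def)
  have Fcov: "\<exists>V\<in>\<V>. x \<in> F V" if x: "x \<in> topspace X" for x
  proof -
    obtain Q where Q: "Q \<in> \<V>'" "x \<in> Q" using x V'(1) by (auto simp: open_cover_of_def)
    then obtain R where "R \<in> \<R>" "Q \<subseteq> R" using V'(3) by (auto simp: refines_def)
    then obtain V where "V \<in> \<V>" "X closure_of R \<subseteq> V" by (auto simp: \<R>_def)
    moreover have "X closure_of Q \<subseteq> X closure_of R" using \<open>Q \<subseteq> R\<close> by (rule closure_of_mono)
    moreover have "Q \<subseteq> topspace X" using Q V'(1) by (auto simp: open_cover_of_def dest: openin_subset)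
    then have "x \<in> X closure_of Q" using Q closure_of_subset by blast
    ultimately show ?thesis using Q by (auto simp: F_def)
  qed
  have nor: "normal_space X" by (rule para_normal[OF par reg])
  have "\<forall>V\<in>\<V>. \<exists>g. continuous_map X euclideanreal g \<and> g ` F V \<subseteq> {1} \<and> g ` (topspace X - V) \<subseteq> {0}"
  proof
    fix V assume "V \<in> \<V>"
    then have "openin X V" using V(1) by (auto simp: open_cover_of_def)
    then have "closedin X (topspace X - V)" by auto
    moreover have "disjnt (F V) (topspace X - V)" using FV by (auto simp: disjnt_def)
    ultimately obtain g :: "'a \<Rightarrow> real" where "continuous_map X euclideanreal g" "g ` F V \<subseteq> {1}" "g ` (topspace X - V) \<subseteq> {0}"
      using Urysohn_lemma_alt[OF nor Fc] by metis
    then show "\<exists>g. continuous_map X euclideanreal g \<and> g ` F V \<subseteq> {1} \<and> g ` (topspace X - V) \<subseteq> {0}"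
      by blast
  qed
  then obtain g where g: "\<And>V. V \<in> \<V> \<Longrightarrow> continuous_map X euclideanreal (g V)"
    "\<And>V. V \<in> \<V> \<Longrightarrow> g V ` F V \<subseteq> {1}" "\<And>V. V \<in> \<V> \<Longrightarrow> g V ` (topspace X - V) \<subseteq> {0}"
    by metis
  define h where "h V x = max 0 (min 1 (g V x))" for V x
  have h01: "0 \<le> h V x" "h V x \<le> 1" for V x by (auto simp: h_def)
  have hlip: "\<bar>h V x - h V y\<bar> \<le> \<bar>g V x - g V y\<bar>" for V x y unfolding h_def by (rule clamp_lip)
  have h0: "h V x = 0" if "V \<in> \<V>" "x \<in> topspace X" "x \<notin> V" for V x
    using g(3)[OF that(1)] that by (auto simp: h_def)
  have h1: "h V x = 1" if "V \<in> \<V>" "x \<in> F V" for V x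
    using g(2)[OF that(1)] that by (auto simp: h_def)
  define W where "W V = {x \<in> topspace X. g V x \<in> {1/2<..}}" for V
  have hW: "x \<in> W V \<longleftrightarrow> x \<in> topspace X \<and> h V x > 1/2" for V x
    by (auto simp: W_def h_def)
  have Wo: "openin X (W V)" if "V \<in> \<V>" for V
  proof -
    have "\<forall>U. open U \<longrightarrow> openin X {x \<in> topspace X. g V x \<in> U}"
      using g(1)[OF that] by (simp add: continuous_map_def)
    then show ?thesis unfolding W_def using open_greaterThan by blast
  qed
  have WV: "W V \<subseteq> V" if "V \<in> \<V>" for V
    using h0[OF that] hW by fastforce
  define \<W> where "\<W> = W ` \<V>"
  define \<rho> where "\<rho> x y = Sup (insert 0 ((\<lambda>V. \<bar>h V x - h V y\<bar>) ` \<V>))" for x y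
  have tb: "\<bar>h V x - h V y\<bar> \<le> 1" for V x y using h01[of V x] h01[of V y] by auto
  have rho_ub: "\<bar>h V x - h V y\<bar> \<le> \<rho> x y" if "V \<in> \<V>" for V x y
    unfolding \<rho>_def by (rule sup_ub[OF tb that])
  have rho_le: "\<rho> x y \<le> c" if "\<And>V. V \<in> \<V> \<Longrightarrow> \<bar>h V x - h V y\<bar> \<le> c" "0 \<le> c" for x y c
    unfolding \<rho>_def by (rule sup_le[OF that])
  have "pm X \<rho>"
    unfolding pm_def
  proof (intro conjI allI ballI impI)
    fix x y
    show "0 \<le> \<rho> x y" unfolding \<rho>_def by (rule sup_ge0[OF tb])
    show "\<rho> x y \<le> 1" by (rule rho_le[OF tb]) auto
    show "\<rho> x y = \<rho> y x" unfolding \<rho>_def by (simp add: abs_minus_commute)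
  next
    fix x
    have "0 \<le> \<rho> x x" unfolding \<rho>_def by (rule sup_ge0[OF tb])
    moreover have "\<rho> x x \<le> 0" by (rule rho_le) auto
    ultimately show "\<rho> x x = 0" by simp
  next
    fix x y z
    have p: "0 \<le> \<rho> x y" "0 \<le> \<rho> y z" unfolding \<rho>_def by (rule sup_ge0[OF tb])+
    show "\<rho> x z \<le> \<rho> x y + \<rho> y z"
    proof (rule rho_le)
      fix V assume "V \<in> \<V>"
      have "\<bar>h V x - h V z\<bar> \<le> \<bar>h V x - h V y\<bar> + \<bar>h V y - h V z\<bar>" by linarith
      then show "\<bar>h V x - h V z\<bar> \<le> \<rho> x y + \<rho> y z"
        using rho_ub[OF \<open>V \<in> \<V>\<close>, of x y] rho_ub[OF \<open>V \<in> \<V>\<close>, of y z] by linarith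
    qed (use p in auto)
  next
    fix x and e :: real
    assume x: "x \<in> topspace X" and e: "0 < e"
    obtain N0 where N0: "openin X N0" "x \<in> N0" "finite {V\<in>\<V>. V \<inter> N0 \<noteq> {}}"
      using V(2) x unfolding locally_finite_in_def by blast
    have "\<forall>V\<in>{V\<in>\<V>. V \<inter> N0 \<noteq> {}}. \<exists>N. openin X N \<and> x \<in> N \<and> (\<forall>z\<in>N. \<bar>g V z - g V x\<bar> < e/2)"
    proof
      fix V assume "V \<in> {V\<in>\<V>. V \<inter> N0 \<noteq> {}}"
      then have "V \<in> \<V>" by simp
      show "\<exists>N. openin X N \<and> x \<in> N \<and> (\<forall>z\<in>N. \<bar>g V z - g V x\<bar> < e/2)"
        by (rule cont_nbhd[OF g(1)[OF \<open>V \<in> \<V>\<close>] x]) (use e in simp)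
    qed
    then have "\<exists>N. openin X N \<and> x \<in> N \<and> (\<forall>V\<in>{V\<in>\<V>. V \<inter> N0 \<noteq> {}}. \<forall>z\<in>N. \<bar>g V z - g V x\<bar> < e/2)"
      by (rule finite_nbhd[OF N0(3) x])
    then obtain N where N: "openin X N" "x \<in> N" "\<forall>V\<in>{V\<in>\<V>. V \<inter> N0 \<noteq> {}}. \<forall>z\<in>N. \<bar>g V z - g V x\<bar> < e/2"
      by blast
    show "\<exists>N. openin X N \<and> x \<in> N \<and> (\<forall>z\<in>N. \<rho> x z < e)"
    proof (intro exI conjI ballI)
      show "openin X (N0 \<inter> N)" using N0 N by auto
      show "x \<in> N0 \<inter> N" using N0 N by auto
      fix z assume z: "z \<in> N0 \<inter> N"
      then have zt: "z \<in> topspace X" using N0(1) openin_subset by blast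
      have "\<rho> x z \<le> e/2"
      proof (rule rho_le)
        fix V assume V: "V \<in> \<V>"
        show "\<bar>h V x - h V z\<bar> \<le> e/2"
        proof (cases "V \<inter> N0 = {}")
          case True
          then have "x \<notin> V" "z \<notin> V" using N0(2) z by auto
          then show ?thesis using h0[OF V x] h0[OF V zt] e by simp
        next
          case False
          then have "\<bar>g V z - g V x\<bar> < e/2" using N(3) V z by auto
          then show ?thesis using hlip[of V x z] by (simp add: abs_minus_commute)
        qed
      qed (use e in auto)
      then show "\<rho> x z < e" using e by linarith
    qed
  qed
  show ?thesis
    unfolding good_def
  proof (intro exI conjI)
    show "open_cover_of X \<W>"
      unfolding open_cover_of_def
    proof
      show "\<forall>U\<in>\<W>. openin X U" using Wo by (auto simp: \<W>_def)
      show "\<Union>\<W> = topspace X"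
      proof
        show "\<Union>\<W> \<subseteq> topspace X" using hW by (auto simp: \<W>_def)
        show "topspace X \<subseteq> \<Union>\<W>"
        proof
          fix x assume x: "x \<in> topspace X"
          then obtain V where "V \<in> \<V>" "x \<in> F V" using Fcov by blast
          then have "x \<in> W V" using h1 hW x by auto
          then show "x \<in> \<Union>\<W>" using \<open>V \<in> \<V>\<close> by (auto simp: \<W>_def)
        qed
      qed
    qed
    show "locally_finite_in X \<W>"
      unfolding \<W>_def by (rule locally_finite_in_refinement[OF V(2) WV])
    show "refines \<W> \<U>"
      unfolding refines_def \<W>_def
    proof (intro ballI)
      fix A assume "A \<in> W ` \<V>"
      then obtain V where "V \<in> \<V>" "A = W V" by auto
      moreover then obtain B where "B \<in> \<U>" "V \<subseteq> B" using V(3) unfolding refines_def by blast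
      ultimately show "\<exists>B\<in>\<U>. A \<subseteq> B" using WV[OF \<open>V \<in> \<V>\<close>] by blast
    qed
    show "pm X \<rho>" by fact
    show "\<forall>Wa\<in>\<W>. \<forall>x\<in>Wa. \<exists>r>0. \<forall>y\<in>topspace X. \<rho> x y < r \<longrightarrow> y \<in> Wa"
    proof (intro ballI)
      fix Wa x assume "Wa \<in> \<W>" "x \<in> Wa"
      then obtain V where V: "V \<in> \<V>" "Wa = W V" by (auto simp: \<W>_def)
      then have hx: "h V x > 1/2" using hW \<open>x \<in> Wa\<close> by auto
      show "\<exists>r>0. \<forall>y\<in>topspace X. \<rho> x y < r \<longrightarrow> y \<in> Wa"
      proof (intro exI conjI ballI impI)
        show "0 < h V x - 1/2" using hx by simp
        fix y assume "y \<in> topspace X" "\<rho> x y < h V x - 1/2"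
        moreover have "\<bar>h V x - h V y\<bar> \<le> \<rho> x y" by (rule rho_ub[OF V(1)])
        ultimately show "y \<in> Wa" using V(2) hW by auto
      qed
    qed
    show "\<forall>x\<in>topspace X. \<exists>r>0. finite {Wa\<in>\<W>. \<exists>y\<in>topspace X. \<rho> x y < r \<and> y \<in> Wa}"
    proof (intro ballI exI conjI)
      fix x assume x: "x \<in> topspace X"
      show "(0::real) < 1/2" by simp
      have "{Wa\<in>\<W>. \<exists>y\<in>topspace X. \<rho> x y < 1/2 \<and> y \<in> Wa} \<subseteq> W ` {V\<in>\<V>. x \<in> V}"
      proof
        fix Wa assume "Wa \<in> {Wa\<in>\<W>. \<exists>y\<in>topspace X. \<rho> x y < 1/2 \<and> y \<in> Wa}"
        then obtain V y where V: "V \<in> \<V>" "Wa = W V" "y \<in> topspace X" "\<rho> x y < 1/2" "y \<in> W V"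
          by (auto simp: \<W>_def)
        then have "h V y > 1/2" using hW by auto
        moreover have "\<bar>h V x - h V y\<bar> \<le> \<rho> x y" by (rule rho_ub[OF V(1)])
        ultimately have "h V x > 0" using V(4) by linarith
        then have "x \<in> V" using h0[OF V(1) x] by (cases "x \<in> V") auto
        then show "Wa \<in> W ` {V\<in>\<V>. x \<in> V}" using V by auto
      qed
      then show "finite {Wa\<in>\<W>. \<exists>y\<in>topspace X. \<rho> x y < 1/2 \<and> y \<in> Wa}"
        by (rule finite_subset[OF _ finite_imageI[OF lf_point_finite[OF V(2) x]]])
    qed
  qed
qed



lemma K1:
  assumes D: "discrete_family_in X \<A>" and x: "x \<in> topspace X"
  shows "\<exists>V. openin X V \<and> x \<in> V \<and> (\<forall>C1\<in>(\<lambda>S. X closure_of S) ` \<A>. \<forall>C2\<in>(\<lambda>S. X closure_of S) ` \<A>. C1 \<inter> V \<noteq> {} \<and> C2 \<inter> V \<noteq> {} \<longrightarrow> C1 = C2)"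
proof -
  have "\<exists>V. openin X V \<and> x \<in> V \<and> (\<forall>A\<in>\<A>. \<forall>B\<in>\<A>. A \<inter> V \<noteq> {} \<and> B \<inter> V \<noteq> {} \<longrightarrow> A = B)"
    using D x unfolding discrete_family_in_def by (rule bspec)
  then obtain V where V: "openin X V" "x \<in> V" and V3: "\<forall>A\<in>\<A>. \<forall>B\<in>\<A>. A \<inter> V \<noteq> {} \<and> B \<inter> V \<noteq> {} \<longrightarrow> A = B"
    by blast
  have "X closure_of A1 = X closure_of A2" if "A1 \<in> \<A>" "A2 \<in> \<A>" "X closure_of A1 \<inter> V \<noteq> {}" "X closure_of A2 \<inter> V \<noteq> {}" for A1 A2
  proof -
    have "V \<inter> X closure_of A1 \<noteq> {}" "V \<inter> X closure_of A2 \<noteq> {}" using that(3,4) by blast+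
    then have "V \<inter> A1 \<noteq> {}" "V \<inter> A2 \<noteq> {}"
      using openin_Int_closure_of_eq_empty[OF V(1)] by blast+
    then have "A1 = A2" using V3 that(1,2) by blast
    then show ?thesis by simp
  qed
  then show ?thesis using V by blast
qed

lemma discrete_closures:
  assumes D: "discrete_family_in X \<A>"
  shows "locally_finite_in X ((\<lambda>S. X closure_of S) ` \<A>)"
    and "\<forall>C1\<in>(\<lambda>S. X closure_of S) ` \<A>. \<forall>C2\<in>(\<lambda>S. X closure_of S) ` \<A>. C1 \<noteq> C2 \<longrightarrow> C1 \<inter> C2 = {}"
    and "\<forall>C\<in>(\<lambda>S. X closure_of S) ` \<A>. closedin X C"
proof -
  let ?C = "(\<lambda>S. X closure_of S) ` \<A>"
  note K = K1[OF D]
  show "locally_finite_in X ?C"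
    unfolding locally_finite_in_def
  proof (intro conjI ballI)
    show "\<Union>?C \<subseteq> topspace X" by (intro UN_least closure_of_subset_topspace)
    fix x assume "x \<in> topspace X"
    from K[OF this] obtain V where V: "openin X V" "x \<in> V" and V3: "\<forall>C1\<in>?C. \<forall>C2\<in>?C. C1 \<inter> V \<noteq> {} \<and> C2 \<inter> V \<noteq> {} \<longrightarrow> C1 = C2"
      by blast
    have "finite {U \<in> ?C. U \<inter> V \<noteq> {}}"
    proof (cases "{U \<in> ?C. U \<inter> V \<noteq> {}} = {}")
      case False
      then obtain U0 where U0: "U0 \<in> ?C" "U0 \<inter> V \<noteq> {}" by blast
      have "{U \<in> ?C. U \<inter> V \<noteq> {}} \<subseteq> {U0}"
      proof
        fix U assume "U \<in> {U \<in> ?C. U \<inter> V \<noteq> {}}"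
        then have U: "U \<in> ?C" "U \<inter> V \<noteq> {}" by auto
        have "U = U0" using bspec[OF bspec[OF V3 U(1)] U0(1)] U(2) U0(2) by blast
        then show "U \<in> {U0}" by simp
      qed
      then show ?thesis using finite_subset by blast
    next
      case True then show ?thesis by (metis finite.emptyI)
    qed
    then show "\<exists>V. openin X V \<and> x \<in> V \<and> finite {U \<in> ?C. U \<inter> V \<noteq> {}}" using V by blast
  qed
  show "\<forall>C1\<in>?C. \<forall>C2\<in>?C. C1 \<noteq> C2 \<longrightarrow> C1 \<inter> C2 = {}"
  proof (intro ballI impI)
    fix C1 C2 assume C: "C1 \<in> ?C" "C2 \<in> ?C" "C1 \<noteq> C2"
    show "C1 \<inter> C2 = {}"
    proof (rule ccontr)
      assume "C1 \<inter> C2 \<noteq> {}"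
      then obtain z where z: "z \<in> C1" "z \<in> C2" by blast
      then have "z \<in> topspace X" using C(1) closure_of_subset_topspace[of X] by auto
      from K[OF this] obtain V where V: "openin X V" "z \<in> V" and V3: "\<forall>C1\<in>?C. \<forall>C2\<in>?C. C1 \<inter> V \<noteq> {} \<and> C2 \<inter> V \<noteq> {} \<longrightarrow> C1 = C2"
        by blast
      have "C1 \<inter> V \<noteq> {}" "C2 \<inter> V \<noteq> {}" using z V(2) by blast+
      then have "C1 = C2" using bspec[OF bspec[OF V3 C(1)] C(2)] by blast
      then show False using C(3) by simp
    qed
  qed
  show "\<forall>C\<in>?C. closedin X C" by auto
qed

definition sepcov :: "'a topology \<Rightarrow> 'a set set \<Rightarrow> 'a set set \<Rightarrow> 'a set set" where
  "sepcov X \<A> \<B> = insert (topspace X - \<Union>\<A>)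
      ((\<lambda>A. topspace X - \<Union>(\<A> - {A}) - \<Union>{B\<in>\<B>. B \<inter> A = {}}) ` \<A>)"

lemma sepcov:
  assumes A: "locally_finite_in X \<A>" "\<forall>C1\<in>\<A>. \<forall>C2\<in>\<A>. C1 \<noteq> C2 \<longrightarrow> C1 \<inter> C2 = {}" "\<forall>C\<in>\<A>. closedin X C"
    and B: "locally_finite_in X \<B>" "\<forall>C\<in>\<B>. closedin X C"
  shows "open_cover_of X (sepcov X \<A> \<B>)"
    and "\<And>x y A B. A \<in> \<A> \<Longrightarrow> B \<in> \<B> \<Longrightarrow> A \<inter> B = {} \<Longrightarrow> x \<in> A \<Longrightarrow> y \<in> B \<Longrightarrow>
           \<forall>U\<in>sepcov X \<A> \<B>. x \<in> U \<longrightarrow> y \<notin> U"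
proof -
  have cA: "closedin X (\<Union>\<A>')" if "\<A>' \<subseteq> \<A>" for \<A>'
    by (rule closedin_locally_finite_Union) (use A locally_finite_in_subset[OF A(1) that] that in auto)
  have cB: "closedin X (\<Union>\<B>')" if "\<B>' \<subseteq> \<B>" for \<B>'
    by (rule closedin_locally_finite_Union) (use B locally_finite_in_subset[OF B(1) that] that in auto)
  show "open_cover_of X (sepcov X \<A> \<B>)"
    unfolding open_cover_of_def
  proof
    show "\<forall>U\<in>sepcov X \<A> \<B>. openin X U"
    proof
      fix U assume "U \<in> sepcov X \<A> \<B>"
      then consider "U = topspace X - \<Union>\<A>" | A where "A \<in> \<A>" "U = topspace X - \<Union>(\<A> - {A}) - \<Union>{B\<in>\<B>. B \<inter> A = {}}"
        unfolding sepcov_def by blast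
      then show "openin X U"
      proof cases
        case 1 then show ?thesis using cA[of \<A>] by auto
      next
        case 2
        have "openin X (topspace X - \<Union>(\<A> - {A}))" using cA[of "\<A> - {A}"] by auto
        moreover have "closedin X (\<Union>{B\<in>\<B>. B \<inter> A = {}})" using cB by auto
        ultimately show ?thesis using 2 by (simp add: openin_diff)
      qed
    qed
    show "\<Union>(sepcov X \<A> \<B>) = topspace X"
    proof
      show "\<Union>(sepcov X \<A> \<B>) \<subseteq> topspace X" unfolding sepcov_def by blast
      show "topspace X \<subseteq> \<Union>(sepcov X \<A> \<B>)"
      proof
        fix z assume z: "z \<in> topspace X"
        show "z \<in> \<Union>(sepcov X \<A> \<B>)"
        proof (cases "z \<in> \<Union>\<A>")
          case False then show ?thesis using z unfolding sepcov_def by blast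
        next
          case True
          then obtain A where "A \<in> \<A>" "z \<in> A" by blast
          have n1: "z \<notin> \<Union>(\<A> - {A})"
          proof
            assume "z \<in> \<Union>(\<A> - {A})"
            then obtain A'' where "A'' \<in> \<A>" "A'' \<noteq> A" "z \<in> A''" by blast
            then show False using A(2) \<open>A \<in> \<A>\<close> \<open>z \<in> A\<close> by blast
          qed
          have n2: "z \<notin> \<Union>{B\<in>\<B>. B \<inter> A = {}}" using \<open>z \<in> A\<close> by blast
          have "topspace X - \<Union>(\<A> - {A}) - \<Union>{B\<in>\<B>. B \<inter> A = {}} \<in> sepcov X \<A> \<B>"
            unfolding sepcov_def using \<open>A \<in> \<A>\<close> by blast
          moreover have "z \<in> topspace X - \<Union>(\<A> - {A}) - \<Union>{B\<in>\<B>. B \<inter> A = {}}"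
            using z n1 n2 by blast
          ultimately show ?thesis by blast
        qed
      qed
    qed
  qed
  show "\<forall>U\<in>sepcov X \<A> \<B>. x \<in> U \<longrightarrow> y \<notin> U"
    if AB: "A \<in> \<A>" "B \<in> \<B>" "A \<inter> B = {}" "x \<in> A" "y \<in> B" for x y A B
  proof (intro ballI impI)
    fix U assume "U \<in> sepcov X \<A> \<B>" "x \<in> U"
    then consider "U = topspace X - \<Union>\<A>" | A' where "A' \<in> \<A>" "U = topspace X - \<Union>(\<A> - {A'}) - \<Union>{B\<in>\<B>. B \<inter> A' = {}}"
      unfolding sepcov_def by blast
    then show "y \<notin> U"
    proof cases
      case 1 then show ?thesis using AB \<open>x \<in> U\<close> by blast
    next
      case 2
      have "A' = A"
      proof (rule ccontr)
        assume "A' \<noteq> A"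
        then have "x \<in> \<Union>(\<A> - {A'})" using AB by blast
        then show False using 2 \<open>x \<in> U\<close> by blast
      qed
      then show ?thesis using 2 AB by (auto simp: Int_commute)
    qed
  qed
qed

lemma sepD:
  assumes reg: "regular_space X" and t1: "t1_space X" and net: "network_of X \<mu>" and sd: "sigma_discrete_in X \<mu>"
  shows "\<exists>G::nat \<Rightarrow> 'a set set. (\<forall>n. open_cover_of X (G n)) \<and>
           (\<forall>x\<in>topspace X. \<forall>y\<in>topspace X. x \<noteq> y \<longrightarrow> (\<exists>n. \<forall>U\<in>G n. x \<in> U \<longrightarrow> y \<notin> U))"
proof -
  obtain f :: "nat \<Rightarrow> 'a set set" where f: "\<And>n. discrete_family_in X (f n)" "\<mu> = (\<Union>n. f n)"
    using sd unfolding sigma_discrete_in_def by blast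
  define C where "C n = (\<lambda>S. X closure_of S) ` f n" for n
  note dc = discrete_closures[OF f(1), folded C_def]
  define G where "G m = sepcov X (C (fst (prod_decode m))) (C (snd (prod_decode m)))" for m
  have sep: "\<exists>n k A B. A \<in> C n \<and> B \<in> C k \<and> A \<inter> B = {} \<and> x \<in> A \<and> y \<in> B"
    if x: "x \<in> topspace X" and y: "y \<in> topspace X" and xy: "x \<noteq> y" for x y
  proof -
    obtain U where U: "openin X U" "x \<in> U" "y \<notin> U" using t1 x y xy unfolding t1_space_def by blast
    then obtain V where V: "openin X V" "x \<in> V" "X closure_of V \<subseteq> U" using reg_nbhd[OF reg] by metis
    then obtain F where F: "F \<in> \<mu>" "x \<in> F" "F \<subseteq> V" using net unfolding network_of_def by blast
    then obtain n where n: "F \<in> f n" using f(2) by blast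
    define A where "A = X closure_of F"
    have FA: "x \<in> A" unfolding A_def using F V(1) openin_subset closure_of_subset by (metis subsetD subset_trans)
    have "A \<subseteq> X closure_of V" unfolding A_def using F(3) by (rule closure_of_mono)
    then have yA: "y \<notin> A" using V(3) U(3) by blast
    have "openin X (topspace X - A)" unfolding A_def by auto
    then obtain V' where V': "openin X V'" "y \<in> V'" "X closure_of V' \<subseteq> topspace X - A"
      using reg_nbhd[OF reg] y yA by (metis DiffI)
    then obtain F' where F': "F' \<in> \<mu>" "y \<in> F'" "F' \<subseteq> V'" using net unfolding network_of_def by blast
    then obtain k where k: "F' \<in> f k" using f(2) by blast
    define B where "B = X closure_of F'"
    have yB: "y \<in> B" unfolding B_def using F' V'(1) openin_subset closure_of_subset by (metis subsetD subset_trans)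
    have "B \<subseteq> X closure_of V'" unfolding B_def using F'(3) by (rule closure_of_mono)
    then have "A \<inter> B = {}" using V'(3) by blast
    moreover have "A \<in> C n" "B \<in> C k" using n k by (auto simp: A_def B_def C_def)
    ultimately show ?thesis using FA yB by blast
  qed
  show ?thesis
  proof (intro exI[of _ G] conjI allI ballI impI)
    fix m show "open_cover_of X (G m)" unfolding G_def
      by (rule sepcov(1)) (use dc in auto)
  next
    fix x y assume "x \<in> topspace X" "y \<in> topspace X" "x \<noteq> y"
    then obtain n k A B where AB: "A \<in> C n" "B \<in> C k" "A \<inter> B = {}" "x \<in> A" "y \<in> B" using sep by blast
    have "\<forall>U\<in>G (prod_encode (n,k)). x \<in> U \<longrightarrow> y \<notin> U" unfolding G_def
      by simp (rule sepcov(2)[OF _ _ _ _ _ AB]; use dc in auto)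
    then show "\<exists>n. \<forall>U\<in>G n. x \<in> U \<longrightarrow> y \<notin> U" by blast
  qed
qed



definition meet :: "'a set set \<Rightarrow> 'a set set \<Rightarrow> 'a set set" where
  "meet A B = {a \<inter> b | a b. a \<in> A \<and> b \<in> B}"

lemma meet_cover:
  assumes "open_cover_of X A" "open_cover_of X B"
  shows "open_cover_of X (meet A B)"
  unfolding open_cover_of_def
proof
  show "\<forall>U\<in>meet A B. openin X U" using assms by (auto simp: meet_def open_cover_of_def)
  show "\<Union>(meet A B) = topspace X"
  proof
    show "\<Union>(meet A B) \<subseteq> topspace X" using assms by (auto simp: meet_def open_cover_of_def)
    show "topspace X \<subseteq> \<Union>(meet A B)"
    proof
      fix x assume "x \<in> topspace X"
      then obtain a b where "a \<in> A" "b \<in> B" "x \<in> a" "x \<in> b" using assms unfolding open_cover_of_def by blast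
      then show "x \<in> \<Union>(meet A B)" unfolding meet_def by blast
    qed
  qed
qed

lemma meet_ref1: "refines (meet A B) A" unfolding meet_def refines_def by blast
lemma meet_ref2: "refines (meet A B) B" unfolding meet_def refines_def by blast

lemma pow_small:
  assumes "(e::real) > 0" obtains J :: nat where "1 / 2^J < e"
proof -
  obtain J where "(1/2::real)^J < e" using real_arch_pow_inv[of e "1/2"] assms by auto
  then show ?thesis using that by (simp add: power_one_over)
qed

theorem mainTheorem9:
  fixes X :: "'a topology" and L :: "nat \<Rightarrow> 'a set set"
  assumes "paracompact_space X" and "sigma_space X"
    and "\<And>i. open_cover_of X (L i) \<and> locally_finite_in X (L i)"
    and "\<And>i. refines (L (Suc i)) (L i)"
  shows "\<exists>(\<omega> :: nat \<Rightarrow> 'a set set) (m :: 'a metric) (\<psi> :: 'a \<Rightarrow> 'a).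
           (\<forall>i. open_cover_of X (\<omega> i) \<and> locally_finite_in X (\<omega> i) \<and> refines (\<omega> i) (L i)
                \<and> refines (\<omega> (Suc i)) (\<omega> i)) \<and>
           continuous_map X (mtopology_of m) \<psi> \<and>
           bij_betw \<psi> (topspace X) (mspace m) \<and>
           (\<forall>i. open_cover_of (mtopology_of m) ((`) \<psi> ` \<omega> i) \<and>
                locally_finite_in (mtopology_of m) ((`) \<psi> ` \<omega> i))"
proof -
  note par = assms(1)
  have sp: "regular_space X \<and> t1_space X \<and> (\<exists>\<mu>. network_of X \<mu> \<and> sigma_discrete_in X \<mu>)"
    using assms(2) by (simp only: sigma_space_def)
  then have reg: "regular_space X" and t1: "t1_space X" by simp_all
  from sp have "\<exists>\<mu>. network_of X \<mu> \<and> sigma_discrete_in X \<mu>" by simp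
  then obtain \<mu> where "network_of X \<mu> \<and> sigma_discrete_in X \<mu>" ..
  then have net: "network_of X \<mu>" and sd: "sigma_discrete_in X \<mu>" by simp_all
  have "\<exists>G::nat \<Rightarrow> 'a set set. (\<forall>n. open_cover_of X (G n)) \<and>
           (\<forall>x\<in>topspace X. \<forall>y\<in>topspace X. x \<noteq> y \<longrightarrow> (\<exists>n. \<forall>U\<in>G n. x \<in> U \<longrightarrow> y \<notin> U))"
    by (rule sepD[OF reg t1 net sd])
  then obtain G :: "nat \<Rightarrow> 'a set set" where GG: "(\<forall>n. open_cover_of X (G n)) \<and>
           (\<forall>x\<in>topspace X. \<forall>y\<in>topspace X. x \<noteq> y \<longrightarrow> (\<exists>n. \<forall>U\<in>G n. x \<in> U \<longrightarrow> y \<notin> U))" ..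
  then have G0: "\<forall>n. open_cover_of X (G n)"
    and Gsep0: "\<forall>x\<in>topspace X. \<forall>y\<in>topspace X. x \<noteq> y \<longrightarrow> (\<exists>n. \<forall>U\<in>G n. x \<in> U \<longrightarrow> y \<notin> U)"
    by simp_all
  have G: "open_cover_of X (G n)" for n using G0 by blast
  have Gsep: "\<exists>n. \<forall>U\<in>G n. x \<in> U \<longrightarrow> y \<notin> U" if "x \<in> topspace X" "y \<in> topspace X" "x \<noteq> y" for x y
    using Gsep0 that by blast
  define stp where "stp \<U> = (SOME p. good X \<U> (fst p) (snd p))" for \<U> :: "'a set set"
  have stp: "good X \<U> (fst (stp \<U>)) (snd (stp \<U>))" if U: "open_cover_of X \<U>" for \<U>
  proof -
    obtain \<W> \<rho> where "good X \<U> \<W> \<rho>" using keyB[OF par reg U] by blast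
    then have "\<exists>p. good X \<U> (fst p) (snd p)" by (intro exI[of _ "(\<W>, \<rho>)"]) simp
    then show ?thesis unfolding stp_def by (rule someI_ex)
  qed
  define seq where "seq = rec_nat (stp (L 0)) (\<lambda>i p. stp (meet (fst p) (L (Suc i))))"
  have seq0: "seq 0 = stp (L 0)" by (simp add: seq_def)
  have seqS: "seq (Suc i) = stp (meet (fst (seq i)) (L (Suc i)))" for i by (simp add: seq_def)
  have g0: "good X (L 0) (fst (seq 0)) (snd (seq 0))" using stp assms(3) seq0 by simp
  have oc: "open_cover_of X (fst (seq i))" for i
  proof (induction i)
    case 0 then show ?case using g0 by (simp add: good_def)
  next
    case (Suc i)
    then have "good X (meet (fst (seq i)) (L (Suc i))) (fst (seq (Suc i))) (snd (seq (Suc i)))"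
      unfolding seqS by (intro stp meet_cover) (use assms(3) in auto)
    then show ?case by (simp add: good_def)
  qed
  have gS: "good X (meet (fst (seq i)) (L (Suc i))) (fst (seq (Suc i))) (snd (seq (Suc i)))" for i
    unfolding seqS by (intro stp meet_cover oc) (use assms(3) in auto)
  define \<omega> where "\<omega> i = fst (seq i)" for i
  have gi: "good X (if i = 0 then L 0 else meet (\<omega> (i - 1)) (L i)) (\<omega> i) (snd (seq i))" for i
    using g0 gS[of "i - 1"] by (cases i) (auto simp: \<omega>_def)
  define sg where "sg n = stp (G n)" for n
  have gG: "good X (G n) (fst (sg n)) (snd (sg n))" for n unfolding sg_def by (rule stp[OF G])
  define p where "p j = (if even j then snd (seq (j div 2)) else snd (sg (j div 2)))" for j
  have pmp: "pm X (p j)" for j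
    using gi[of "j div 2"] gG[of "j div 2"] by (auto simp: p_def good_def)
  define \<rho> where "\<rho> x y = Sup (insert 0 ((\<lambda>j. p j x y / 2^j) ` UNIV))" for x y
  have tb: "p j x y / 2^j \<le> 1" for j x y
  proof -
    have "p j x y \<le> 1" "0 \<le> p j x y" using pmp[of j] by (auto simp: pm_def)
    moreover have "(1::real) \<le> 2^j" by simp
    ultimately have "p j x y \<le> 2^j" by linarith
    then show ?thesis by (simp add: divide_le_eq)
  qed
  have rub: "p j x y / 2^j \<le> \<rho> x y" for j x y unfolding \<rho>_def by (rule sup_ub[OF tb]) simp
  have rle: "\<rho> x y \<le> c" if "\<And>j. p j x y / 2^j \<le> c" "0 \<le> c" for x y c
    unfolding \<rho>_def by (rule sup_le) (use that in auto)
  have rge: "0 \<le> \<rho> x y" for x y unfolding \<rho>_def by (rule sup_ge0[OF tb])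
  have pnn: "0 \<le> p j x y" for j x y using pmp[of j] by (auto simp: pm_def)
  have psym: "(\<lambda>j. p j x y / 2^j) = (\<lambda>j. p j y x / 2^j)" for x y
    using pmp by (auto simp: pm_def)
  have pzero: "p j x x = 0" for j x using pmp[of j] by (auto simp: pm_def)
  have ptri: "p j x z \<le> p j x y + p j y z" for j x y z using pmp[of j] by (auto simp: pm_def)
  have pscale: "p j x y < r" if "\<rho> x y < r / 2^j" for j x y r
  proof -
    have "p j x y / 2^j < r / 2^j" using rub[of j x y] that by linarith
    then show ?thesis by (simp add: divide_less_cancel)
  qed
  have rpos: "0 < \<rho> x y" if xy: "x \<in> topspace X" "y \<in> topspace X" "x \<noteq> y" for x y
  proof -
    obtain n where n: "\<forall>U\<in>G n. x \<in> U \<longrightarrow> y \<notin> U" using Gsep[OF xy] by blast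
    have gn: "good X (G n) (fst (sg n)) (snd (sg n))" by (rule gG)
    then have "open_cover_of X (fst (sg n))" by (simp add: good_def)
    then obtain W where W: "W \<in> fst (sg n)" "x \<in> W" using xy(1) unfolding open_cover_of_def by blast
    then obtain U where U: "U \<in> G n" "W \<subseteq> U" using gn unfolding good_def refines_def by blast
    then have yW: "y \<notin> W" using n W(2) by blast
    obtain r where r: "r > 0" "\<forall>y\<in>topspace X. snd (sg n) x y < r \<longrightarrow> y \<in> W"
      using gn W unfolding good_def by blast
    then have "r \<le> snd (sg n) x y" using yW xy(2) by force
    moreover have "p (2*n+1) = snd (sg n)" by (simp add: p_def)
    ultimately have "r / 2^(2*n+1) \<le> p (2*n+1) x y / 2^(2*n+1)" by (simp add: divide_right_mono)
    moreover have "0 < r / 2^(2*n+1)" using r by simp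
    ultimately show ?thesis using rub[of "2*n+1" x y] by linarith
  qed
  have MS: "Metric_space (topspace X) \<rho>"
  proof
    fix x y
    show "0 \<le> \<rho> x y" by (rule rge)
    show "\<rho> x y = \<rho> y x" unfolding \<rho>_def by (simp only: psym)
  next
    fix x y assume xy: "x \<in> topspace X" "y \<in> topspace X"
    show "(\<rho> x y = 0) = (x = y)"
    proof
      assume "\<rho> x y = 0" then show "x = y" using rpos[OF xy] by force
    next
      assume "x = y"
      moreover have "\<rho> x x \<le> 0" by (rule rle) (auto simp: pzero)
      ultimately show "\<rho> x y = 0" using rge[of x x] by simp
    qed
  next
    fix x y z
    show "\<rho> x z \<le> \<rho> x y + \<rho> y z"
    proof (rule rle)
      fix j
      have "p j x z / 2^j \<le> p j x y / 2^j + p j y z / 2^j"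
        using ptri[of j x z y] by (simp add: add_divide_distrib[symmetric] divide_right_mono)
      then show "p j x z / 2^j \<le> \<rho> x y + \<rho> y z" using rub[of j x y] rub[of j y z] by linarith
    qed (use rge in auto)
  qed
  have cont: "\<exists>N. openin X N \<and> x \<in> N \<and> (\<forall>z\<in>N. \<rho> x z < e)" if x: "x \<in> topspace X" and e: "e > 0" for x e
  proof -
    obtain J :: nat where J: "1 / 2^J < e/2" using pow_small[of "e/2"] e by auto
    have "\<forall>j\<in>{..<J}. \<exists>N. openin X N \<and> x \<in> N \<and> (\<forall>z\<in>N. p j x z < e/2)"
      using pmp x e unfolding pm_def by (meson half_gt_zero)
    then have "\<exists>N. openin X N \<and> x \<in> N \<and> (\<forall>j\<in>{..<J}. \<forall>z\<in>N. p j x z < e/2)"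
      by (rule finite_nbhd[OF finite_lessThan x])
    then obtain N where N: "openin X N" "x \<in> N" "\<forall>j\<in>{..<J}. \<forall>z\<in>N. p j x z < e/2" by blast
    show ?thesis
    proof (intro exI conjI ballI)
      fix z assume z: "z \<in> N"
      have "\<rho> x z \<le> e/2"
      proof (rule rle)
        fix j
        show "p j x z / 2^j \<le> e/2"
        proof (cases "j < J")
          case True
          then have "p j x z < e/2" using N z by auto
          moreover have "p j x z / 2^j \<le> p j x z"
          proof -
            have "(1::real) \<le> 2^j" by simp
            from mult_left_mono[OF this pnn[of j x z]] show ?thesis by (simp add: divide_le_eq)
          qed
          ultimately show ?thesis by linarith
        next
          case False
          have "(2::real)^J \<le> 2^j" using False by (intro power_increasing) auto
          then have "1 / (2::real)^j \<le> 1 / 2^J" by (intro divide_left_mono) auto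
          moreover have "p j x z / 2^j \<le> 1 / 2^j" using pmp[of j] by (auto simp: pm_def intro: divide_right_mono)
          ultimately show ?thesis using J by linarith
        qed
      qed (use e in auto)
      then show "\<rho> x z < e" using e by linarith
    qed (use N in auto)
  qed
  have p2: "p (2*i) = snd (seq i)" for i by (simp add: p_def)
  interpret M: Metric_space "topspace X" \<rho> by (rule MS)
  have mt: "mtopology_of (metric (topspace X, \<rho>)) = M.mtopology" by simp
  have ms: "mspace (metric (topspace X, \<rho>)) = topspace X" by simp
  have gi': "open_cover_of X (\<omega> i) \<and> locally_finite_in X (\<omega> i)
      \<and> (\<forall>W\<in>\<omega> i. \<forall>x\<in>W. \<exists>r>0. \<forall>y\<in>topspace X. p (2*i) x y < r \<longrightarrow> y \<in> W)
      \<and> (\<forall>x\<in>topspace X. \<exists>r>0. finite {W\<in>\<omega> i. \<exists>y\<in>topspace X. p (2*i) x y < r \<and> y \<in> W})" for i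
    using gi[of i] unfolding good_def p2 by blast
  show ?thesis
  proof (intro exI[of _ \<omega>] exI[of _ "metric (topspace X, \<rho>)"] exI[of _ id] conjI allI)
    fix i
    show "open_cover_of X (\<omega> i)" using gi' by blast
    show "locally_finite_in X (\<omega> i)" using gi' by blast
    show "refines (\<omega> i) (L i)"
    proof (cases i)
      case 0 then show ?thesis using gi[of 0] by (simp add: good_def)
    next
      case (Suc k)
      then have "refines (\<omega> i) (meet (\<omega> k) (L i))" using gi[of i] by (simp add: good_def)
      then show ?thesis using meet_ref2 refines_trans by blast
    qed
    have "refines (\<omega> (Suc i)) (meet (\<omega> i) (L (Suc i)))" using gi[of "Suc i"] by (simp add: good_def)
    then show "refines (\<omega> (Suc i)) (\<omega> i)" using meet_ref1 refines_trans by blast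
  next
    show "continuous_map X (mtopology_of (metric (topspace X, \<rho>))) id"
      unfolding mt M.continuous_map_to_metric
    proof (intro ballI allI impI)
      fix x and e :: real assume x: "x \<in> topspace X" and e: "e > 0"
      obtain N where N: "openin X N" "x \<in> N" "\<forall>z\<in>N. \<rho> x z < e" using cont[OF x e] by blast
      then show "\<exists>U. openin X U \<and> x \<in> U \<and> (\<forall>y\<in>U. id y \<in> M.mball (id x) e)"
        using x openin_subset[OF N(1)] by (intro exI[of _ N]) auto
    qed
  next
    show "bij_betw id (topspace X) (mspace (metric (topspace X, \<rho>)))"
      unfolding ms by (rule bij_betw_id)
  next
    fix i
    show "open_cover_of (mtopology_of (metric (topspace X, \<rho>))) ((`) id ` \<omega> i)"
      unfolding mt image_id id_apply open_cover_of_def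
    proof
      show "\<forall>U\<in>\<omega> i. openin M.mtopology U"
      proof
        fix W assume W: "W \<in> \<omega> i"
        have Wt: "W \<subseteq> topspace X" using gi'[of i] W unfolding open_cover_of_def by blast
        show "openin M.mtopology W"
          unfolding M.openin_mtopology
        proof (intro conjI allI impI)
          show "W \<subseteq> topspace X" by (rule Wt)
          fix x assume "x \<in> W"
          then obtain r where r: "r > 0" "\<forall>y\<in>topspace X. p (2*i) x y < r \<longrightarrow> y \<in> W"
            using gi'[of i] W by blast
          have "M.mball x (r / 2^(2*i)) \<subseteq> W"
          proof
            fix y assume "y \<in> M.mball x (r / 2^(2*i))"
            then have "y \<in> topspace X" "\<rho> x y < r / 2^(2*i)" by auto
            then show "y \<in> W" using r(2) pscale by blast
          qed
          then show "\<exists>r>0. M.mball x r \<subseteq> W" using r(1) by (intro exI[of _ "r / 2^(2*i)"]) auto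
        qed
      qed
      show "\<Union>(\<omega> i) = topspace M.mtopology" using gi'[of i] by (simp add: open_cover_of_def)
    qed
    show "locally_finite_in (mtopology_of (metric (topspace X, \<rho>))) ((`) id ` \<omega> i)"
      unfolding mt image_id id_apply locally_finite_in_def
    proof (intro conjI ballI)
      show "\<Union>(\<omega> i) \<subseteq> topspace M.mtopology" using gi'[of i] by (simp add: open_cover_of_def)
      fix x assume "x \<in> topspace M.mtopology"
      then have x: "x \<in> topspace X" by simp
      then obtain r where r: "r > 0" "finite {W\<in>\<omega> i. \<exists>y\<in>topspace X. p (2*i) x y < r \<and> y \<in> W}"
        using gi'[of i] by blast
      have "{U \<in> \<omega> i. U \<inter> M.mball x (r / 2^(2*i)) \<noteq> {}} \<subseteq> {W\<in>\<omega> i. \<exists>y\<in>topspace X. p (2*i) x y < r \<and> y \<in> W}"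
      proof
        fix U assume "U \<in> {U \<in> \<omega> i. U \<inter> M.mball x (r / 2^(2*i)) \<noteq> {}}"
        then obtain y where "U \<in> \<omega> i" "y \<in> U" "y \<in> topspace X" "\<rho> x y < r / 2^(2*i)" by auto
        then show "U \<in> {W\<in>\<omega> i. \<exists>y\<in>topspace X. p (2*i) x y < r \<and> y \<in> W}" using pscale by blast
      qed
      then have "finite {U \<in> \<omega> i. U \<inter> M.mball x (r / 2^(2*i)) \<noteq> {}}" using r(2) finite_subset by blast
      moreover have "x \<in> M.mball x (r / 2^(2*i))" using x r(1) by simp
      ultimately show "\<exists>V. openin M.mtopology V \<and> x \<in> V \<and> finite {U \<in> \<omega> i. U \<inter> V \<noteq> {}}"
        using M.openin_mball by blast
    qed
  qed
qed


end
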